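(* Let $n$ be even. For $i=1,2$ let $E_i=\{e^{(i)}_0,\dots,e^{(i)}_{2^{\lambda_i}-1}\}\subset\mathbb F_2^n$ be a linear subspace of dimension $\lambda_i$, listed in lexicographic order (so $e^{(i)}_0=\mathbf 0_n$), let $v_i\in\mathbb F_2^n$, and let $S^{[i]}=v_i\oplus E_i=\{\omega^{(i)}_j=v_i\oplus e^{(i)}_j\}$, where $S^{[1]}\cap S^{[2]}=\emptyset$ and $2^{\lambda_1}+2^{\lambda_2}<2^n$. Let $f^*_{[i]}:S^{[i]}\to\mathbb F_2$, and regard $f^*_{[i]}$ also as a function on $\mathbb F_2^{\lambda_i}$ via $f^*_{[i]}(x_j):=f^*_{[i]}(\omega^{(i)}_j)$, where $\mathbb F_2^{\lambda_i}=\{x_0,\dots,x_{2^{\lambda_i}-1}\}$ is in lexicographic order. Suppose that, as functions on $\mathbb F_2^{\lambda_i}$, $f^*_{[i]}$ is $s_i$-plateaued ($i=1,2$), and that $f^*_{[1]},f^*_{[2]}$ are totally disjoint spectra functions (as functions on $S^{[1]},S^{[2]}$). Define $W:\mathbb F_2^n\to\mathbb Z$ by $W(u)=0$ for $u\notin S^{[1]}\cup S^{[2]}$, $W(u)=(-1)^{f^*_{[1]}(u)}2^{(n+2)/2}$ for $u\in S^{[1]}$, $W(u)=(-1)^{f^*_{[2]}(u)}2^{n/2}$ for $u\in S^{[2]}$. Then $W$ is the Walsh spectrum of a Boolean function $f:\mathbb F_2^n\to\mathbb F_2$ (which then has $W_f(u)\in\{0,\pm2^{n/2},\pm2^{(n+2)/2}\}$)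 if and only if $\lambda_1+s_1+2=\lambda_2+s_2=n$.
   Context: $W_f(\omega)=\sum_{x}(-1)^{f(x)\oplus\omega\cdot x}$. A function $g:\mathbb F_2^\lambda\to\mathbb F_2$ is $s$-plateaued if $W_g(\omega)\in\{0,\pm2^{(\lambda+s)/2}\}$ for all $\omega$. Lexicographic order: $e$ precedes $e'$ iff the integer with binary expansion $e$ (first coordinate most significant) is smaller. Totally disjoint spectra functions: for disjoint $S^{[1]},S^{[2]}\subset\mathbb F_2^n$ and functions $f^*_{[i]}:S^{[i]}\to\mathbb F_2$, put $X_i(u)=\sum_{\omega\in S^{[i]}}(-1)^{f^*_{[i]}(\omega)\oplus u\cdot\omega}$; the pair is totally disjoint spectra if $X_1(u)X_2(u)=0$ and $|X_1(u)|+|X_2(u)|>0$ for all $u\in\mathbb F_2^n$. *)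

theory Defs
  imports Complex_Main
begin

text \<open>Vectors of F_2^n are boolean lists of length n; True = 1, first coordinate first.\<close>

definition vecs :: "nat \<Rightarrow> bool list set" where
  "vecs n = {xs. length xs = n}"

definition zerov :: "nat \<Rightarrow> bool list" where
  "zerov n = replicate n False"

definition vxor :: "bool list \<Rightarrow> bool list \<Rightarrow> bool list" where
  "vxor u v = map2 (\<noteq>) u v"

definition dotp :: "bool list \<Rightarrow> bool list \<Rightarrow> bool" where
  "dotp u x = odd (card {i. i < length u \<and> i < length x \<and> u ! i \<and> x ! i})"

definition sgn1 :: "bool \<Rightarrow> int" where
  "sgn1 b = (if b then -1 else 1)"

definition walsh :: "nat \<Rightarrow> (bool list \<Rightarrow> bool) \<Rightarrow> bool list \<Rightarrow> int" where
  "walsh m g w = (\<Sum>x\<in>vecs m. sgn1 (g x \<noteq> dotp w x))"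

definition plateaued :: "nat \<Rightarrow> nat \<Rightarrow> (bool list \<Rightarrow> bool) \<Rightarrow> bool" where
  "plateaued m s g \<longleftrightarrow> (\<forall>w\<in>vecs m.
     real_of_int (walsh m g w) \<in> {0, 2 powr ((real m + real s) / 2), - (2 powr ((real m + real s) / 2))})"

text \<open>Linear subspace of F_2^n and its dimension (over F_2, dim E = k iff |E| = 2^k).\<close>
definition lin_subspace :: "nat \<Rightarrow> bool list set \<Rightarrow> bool" where
  "lin_subspace n E \<longleftrightarrow> E \<subseteq> vecs n \<and> zerov n \<in> E \<and> (\<forall>a\<in>E. \<forall>b\<in>E. vxor a b \<in> E)"

definition subspace_dim :: "nat \<Rightarrow> bool list set \<Rightarrow> nat \<Rightarrow> bool" where
  "subspace_dim n E k \<longleftrightarrow> lin_subspace n E \<and> card E = 2 ^ k"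

text \<open>Integer with binary expansion xs, first coordinate most significant.\<close>
definition bv_val :: "bool list \<Rightarrow> nat" where
  "bv_val xs = foldl (\<lambda>a b. 2 * a + (if b then 1 else 0)) 0 xs"

text \<open>The j-th element (0-based) of E in lexicographic order.\<close>
definition lex_enum :: "bool list set \<Rightarrow> nat \<Rightarrow> bool list" where
  "lex_enum E j = (THE e. e \<in> E \<and> card {e'\<in>E. bv_val e' < bv_val e} = j)"

text \<open>f on the coset v + E regarded as a function on F_2^k:
  x_j (the j-th vector of F_2^k in lexicographic order, i.e. bv_val x_j = j) is sent to
  f(v + e_j).\<close>
definition coset_transfer :: "bool list \<Rightarrow> bool list set \<Rightarrow> (bool list \<Rightarrow> bool) \<Rightarrow> bool list \<Rightarrow> bool" where
  "coset_transfer v E f x = f (vxor v (lex_enum E (bv_val x)))"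

definition Xsum :: "bool list set \<Rightarrow> (bool list \<Rightarrow> bool) \<Rightarrow> bool list \<Rightarrow> int" where
  "Xsum S f u = (\<Sum>w\<in>S. sgn1 (f w \<noteq> dotp u w))"

definition totally_disjoint_spectra ::
  "nat \<Rightarrow> bool list set \<Rightarrow> (bool list \<Rightarrow> bool) \<Rightarrow> bool list set \<Rightarrow> (bool list \<Rightarrow> bool) \<Rightarrow> bool" where
  "totally_disjoint_spectra n S1 f1 S2 f2 \<longleftrightarrow>
     (\<forall>u\<in>vecs n. Xsum S1 f1 u * Xsum S2 f2 u = 0 \<and> \<bar>Xsum S1 f1 u\<bar> + \<bar>Xsum S2 f2 u\<bar> > 0)"

end

theory Submission
  imports Defs
begin



lemma sgn1_xor: "sgn1 (a \<noteq> b) = sgn1 a * sgn1 b"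
  by (simp add: sgn1_def)

lemma dotp_Nil1[simp]: "dotp [] x = False" by (simp add: dotp_def)
lemma dotp_Nil2[simp]: "dotp u [] = False" by (simp add: dotp_def)

lemma dotp_Cons[simp]: "dotp (a#u) (b#x) = ((a \<and> b) \<noteq> dotp u x)"
proof -
  let ?S = "{i. i < length u \<and> i < length x \<and> u ! i \<and> x ! i}"
  have eq: "{i. i < length (a#u) \<and> i < length (b#x) \<and> (a#u) ! i \<and> (b#x) ! i}
      = (if a \<and> b then {0} else {}) \<union> Suc ` ?S"
    apply (rule set_eqI)
    apply (case_tac xa)
     apply auto
    done
  have fin: "finite ?S" by auto
  have "card ((if a \<and> b then {0} else {}) \<union> Suc ` ?S) = (if a \<and> b then 1 else 0) + card ?S"
    using fin by (auto simp: card_image)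
  then show ?thesis unfolding dotp_def eq by auto
qed

lemma dotp_comm: "dotp u x = dotp x u"
  unfolding dotp_def by (metis (no_types, lifting) Collect_cong)

lemma vxor_Nil1[simp]: "vxor [] v = []" by (simp add: vxor_def)
lemma vxor_Nil2[simp]: "vxor u [] = []" by (simp add: vxor_def)
lemma vxor_Cons[simp]: "vxor (a#u) (b#v) = (a \<noteq> b) # vxor u v" by (simp add: vxor_def)
lemma length_vxor[simp]: "length (vxor u v) = min (length u) (length v)" by (simp add: vxor_def)

lemma vxor_vxor: "length u = length v \<Longrightarrow> vxor u (vxor u v) = v"
  by (induction u arbitrary: v) (auto simp: Suc_length_conv)

lemma vxor_comm: "vxor u v = vxor v u"
  apply (induction u arbitrary: v)
   apply simp
  apply (case_tac v; auto)
  done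

lemma zerov_Suc: "zerov (Suc n) = False # zerov n" by (simp add: zerov_def)

lemma vxor_zero: "length u = n \<Longrightarrow> vxor u (zerov n) = u"
  by (induction u arbitrary: n) (auto simp: zerov_def)

lemma vxor_eq_zero: "length u = n \<Longrightarrow> length v = n \<Longrightarrow> vxor u v = zerov n \<longleftrightarrow> u = v"
  by (induction u arbitrary: n v) (auto simp: zerov_def length_Suc_conv)

lemma dotp_vxor: "length u = length v \<Longrightarrow> dotp x (vxor u v) = (dotp x u \<noteq> dotp x v)"
  apply (induction u arbitrary: v x)
   apply simp
  apply (case_tac v; case_tac x; auto)
  done

lemma dotp_zero[simp]: "dotp x (zerov n) = False"
  by (induction x arbitrary: n) (auto simp: zerov_def, case_tac n, auto)

lemma vecs_Suc: "vecs (Suc n) = Cons False ` vecs n \<union> Cons True ` vecs n"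
  by (auto simp: vecs_def length_Suc_conv image_def)

lemma finite_vecs[simp]: "finite (vecs n)"
proof -
  have "vecs n = {xs. set xs \<subseteq> UNIV \<and> length xs = n}" by (auto simp: vecs_def)
  then show ?thesis using finite_lists_length_eq[of "UNIV::bool set" n] by simp
qed

lemma card_vecs: "card (vecs n) = 2 ^ n"
proof -
  have "vecs n = {xs. set xs \<subseteq> UNIV \<and> length xs = n}" by (auto simp: vecs_def)
  then show ?thesis using card_lists_length_eq[of "UNIV::bool set" n] by simp
qed

lemma sum_vecs_Suc: "(\<Sum>x\<in>vecs (Suc n). F x) = (\<Sum>x\<in>vecs n. F (False # x) + F (True # x))"
proof -
  have "(\<Sum>x\<in>vecs (Suc n). F x) = (\<Sum>x\<in>Cons False ` vecs n. F x) + (\<Sum>x\<in>Cons True ` vecs n. F x)"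
    unfolding vecs_Suc by (rule sum.union_disjoint) auto
  also have "\<dots> = (\<Sum>x\<in>vecs n. F (False # x)) + (\<Sum>x\<in>vecs n. F (True # x))"
    by (simp add: sum.reindex)
  finally show ?thesis by (simp add: sum.distrib)
qed

lemma orth0: "z \<in> vecs n \<Longrightarrow> (\<Sum>x\<in>vecs n. sgn1 (dotp x z)) = (if z = zerov n then 2 ^ n else 0)"
proof (induction n arbitrary: z)
  case 0
  then show ?case by (simp add: vecs_def zerov_def sgn1_def)
next
  case (Suc n)
  then obtain c z' where z: "z = c # z'" "z' \<in> vecs n" by (auto simp: vecs_def length_Suc_conv)
  have "(\<Sum>x\<in>vecs (Suc n). sgn1 (dotp x z)) = (\<Sum>x\<in>vecs n. (1 + sgn1 c) * sgn1 (dotp x z'))"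
    unfolding sum_vecs_Suc z by (intro sum.cong) (auto simp: sgn1_def)
  also have "\<dots> = (1 + sgn1 c) * (if z' = zerov n then 2 ^ n else 0)"
    by (simp add: sum_distrib_left[symmetric] Suc.IH z)
  finally show ?case by (auto simp: z zerov_Suc sgn1_def)
qed

lemma orth: "w \<in> vecs n \<Longrightarrow> v \<in> vecs n \<Longrightarrow>
   (\<Sum>x\<in>vecs n. sgn1 (dotp x w \<noteq> dotp x v)) = (if w = v then 2 ^ n else 0)"
proof -
  assume w: "w \<in> vecs n" and v: "v \<in> vecs n"
  have "(\<Sum>x\<in>vecs n. sgn1 (dotp x w \<noteq> dotp x v)) = (\<Sum>x\<in>vecs n. sgn1 (dotp x (vxor w v)))"
    using w v by (intro sum.cong) (auto simp: dotp_vxor vecs_def)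
  also have "\<dots> = (if vxor w v = zerov n then 2 ^ n else 0)"
    using w v by (intro orth0) (auto simp: vecs_def)
  finally show ?thesis using w v vxor_eq_zero by (auto simp: vecs_def)
qed




lemma bv_foldl_gen: "foldl (\<lambda>a b. 2 * a + (if b then 1 else 0)) (a::nat) xs
   = a * 2 ^ length xs + foldl (\<lambda>a b. 2 * a + (if b then 1 else 0)) 0 xs"
proof (induction xs arbitrary: a)
  case Nil then show ?case by simp
next
  case (Cons x xs)
  show ?case
    apply (simp only: foldl_Cons)
    apply (subst Cons.IH)
    apply (subst (2) Cons.IH)
    apply (simp add: algebra_simps)
    done
qed

lemma bv_Nil[simp]: "bv_val [] = 0" by (simp add: bv_val_def)

lemma bv_Cons[simp]: "bv_val (b # xs) = (if b then 2 ^ length xs else 0) + bv_val xs"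
  unfolding bv_val_def by (subst foldl_Cons, subst bv_foldl_gen) simp

lemma bv_less: "bv_val xs < 2 ^ length xs"
  by (induction xs) auto

lemma bv_inj_aux: "length u = length v \<Longrightarrow> bv_val u = bv_val v \<Longrightarrow> u = v"
proof (induction u arbitrary: v)
  case Nil then show ?case by simp
next
  case (Cons a u)
  then obtain b v' where v: "v = b # v'" "length v' = length u" by (cases v) auto
  have "bv_val u < 2 ^ length u" "bv_val v' < 2 ^ length u" using bv_less[of u] bv_less[of v'] v(2) by simp_all
  then have "a = b" using Cons.prems v by (auto split: if_splits)
  then show ?case using Cons v by auto
qed

lemma bv_inj: "inj_on bv_val (vecs n)"
  by (auto simp: inj_on_def vecs_def intro: bv_inj_aux)

lemma bv_bij: "bij_betw bv_val (vecs n) {..<2^n}"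
proof -
  have sub: "bv_val ` vecs n \<subseteq> {..<2^n}" using bv_less by (auto simp: vecs_def)
  have "card (bv_val ` vecs n) = 2 ^ n" using bv_inj card_vecs by (simp add: card_image)
  then have "bv_val ` vecs n = {..<2^n}" using sub by (intro card_subset_eq) auto
  then show ?thesis using bv_inj by (simp add: bij_betw_def)
qed

lemma diff_at: "length u = length v \<Longrightarrow> p < length u \<Longrightarrow> (\<forall>i<p. u ! i = v ! i) \<Longrightarrow> u ! p \<noteq> v ! p
   \<Longrightarrow> (bv_val u < bv_val v \<longleftrightarrow> v ! p)"
proof (induction u arbitrary: v p)
  case Nil then show ?case by simp
next
  case (Cons a u)
  obtain b v' where v: "v = b # v'" using Cons.prems(1) by (cases v) simp_all
  have lv: "length u = length v'" using Cons.prems(1) v by simp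
  have l: "bv_val u < 2 ^ length u" "bv_val v' < 2 ^ length u" using bv_less[of u] bv_less[of v'] lv by simp_all
  show ?case
  proof (cases p)
    case 0
    then have "a \<noteq> b" using Cons.prems v by simp
    then show ?thesis using l v 0 lv by (cases a; cases b; simp)
  next
    case (Suc q)
    have e0: "a = b" using Cons.prems(3) v Suc by (metis nth_Cons_0 zero_less_Suc)
    have e: "\<forall>i<q. u ! i = v' ! i"
    proof (intro allI impI)
      fix i assume "i < q"
      then have "(a#u) ! Suc i = (b#v') ! Suc i" using Cons.prems(3) v Suc by (metis Suc_mono)
      then show "u ! i = v' ! i" by simp
    qed
    have d: "u ! q \<noteq> v' ! q" and q: "q < length u" using Cons.prems v Suc by simp_all
    from Cons.IH[OF lv q e d] have "(bv_val u < bv_val v') = v' ! q" .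
    then show ?thesis using v Suc e0 lv by simp
  qed
qed

lemma first_diff: "length u = length v \<Longrightarrow> u \<noteq> v \<Longrightarrow>
   \<exists>p < length u. (\<forall>i<p. u ! i = v ! i) \<and> u ! p \<noteq> v ! p"
proof (induction u arbitrary: v)
  case Nil then show ?case by simp
next
  case (Cons a u)
  obtain b v' where v: "v = b # v'" using Cons.prems(1) by (cases v) simp_all
  have lv: "length u = length v'" using Cons.prems(1) v by simp
  show ?case
  proof (cases "a = b")
    case True
    then have "u \<noteq> v'" using Cons.prems(2) v by simp
    from Cons.IH[OF lv this] obtain p where p: "p < length u" "\<forall>i<p. u ! i = v' ! i" "u ! p \<noteq> v' ! p"
      by blast
    have "\<forall>i<Suc p. (a#u) ! i = (b#v') ! i"
    proof (intro allI impI)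
      fix i assume "i < Suc p"
      then show "(a#u) ! i = (b#v') ! i" using p True by (cases i) auto
    qed
    then show ?thesis using True v p by (intro exI[of _ "Suc p"]) simp
  next
    case False
    then show ?thesis using v by (intro exI[of _ 0]) simp
  qed
qed

definition rk :: "bool list set \<Rightarrow> bool list \<Rightarrow> nat" where
  "rk E e = card {e'\<in>E. bv_val e' < bv_val e}"

lemma rk_mono: "finite E \<Longrightarrow> e1 \<in> E \<Longrightarrow> bv_val e1 < bv_val e2 \<Longrightarrow> rk E e1 < rk E e2"
proof -
  assume f: "finite E" and e1: "e1 \<in> E" and lt: "bv_val e1 < bv_val e2"
  have "{e'\<in>E. bv_val e' < bv_val e1} \<subset> {e'\<in>E. bv_val e' < bv_val e2}"
  proof
    show "{e'\<in>E. bv_val e' < bv_val e1} \<subseteq> {e'\<in>E. bv_val e' < bv_val e2}"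
      using lt by auto
    have "e1 \<in> {e'\<in>E. bv_val e' < bv_val e2}" "e1 \<notin> {e'\<in>E. bv_val e' < bv_val e1}"
      using e1 lt by auto
    then show "{e'\<in>E. bv_val e' < bv_val e1} \<noteq> {e'\<in>E. bv_val e' < bv_val e2}" by blast
  qed
  moreover have "finite {e'\<in>E. bv_val e' < bv_val e2}" using f by simp
  ultimately show ?thesis unfolding rk_def by (rule psubset_card_mono[rotated])
qed

lemma rk_less: "finite E \<Longrightarrow> e \<in> E \<Longrightarrow> rk E e < card E"
proof -
  assume f: "finite E" and e: "e \<in> E"
  have "{e'\<in>E. bv_val e' < bv_val e} \<subset> E" using e by auto
  then show ?thesis unfolding rk_def using f by (rule psubset_card_mono[rotated])
qed

lemma rk_inj: "finite E \<Longrightarrow> inj_on bv_val E \<Longrightarrow> e1 \<in> E \<Longrightarrow> e2 \<in> E \<Longrightarrow> rk E e1 = rk E e2 \<Longrightarrow> e1 = e2"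
proof (rule ccontr)
  assume f: "finite E" and i: "inj_on bv_val E" and e: "e1 \<in> E" "e2 \<in> E" and r: "rk E e1 = rk E e2"
    and ne: "e1 \<noteq> e2"
  have "bv_val e1 \<noteq> bv_val e2" using i e ne by (auto simp: inj_on_def)
  then have "bv_val e1 < bv_val e2 \<or> bv_val e2 < bv_val e1" by arith
  then show False using rk_mono[OF f e(1), of e2] rk_mono[OF f e(2), of e1] r by auto
qed

lemma rk_bij: "finite E \<Longrightarrow> inj_on bv_val E \<Longrightarrow> bij_betw (rk E) E {..<card E}"
proof -
  assume f: "finite E" and i: "inj_on bv_val E"
  have inj: "inj_on (rk E) E" using rk_inj[OF f i] by (auto simp: inj_on_def)
  have sub: "rk E ` E \<subseteq> {..<card E}" using rk_less[OF f] by auto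
  have "card (rk E ` E) = card E" using inj by (simp add: card_image)
  then have "rk E ` E = {..<card E}" using sub by (intro card_subset_eq) auto
  then show ?thesis using inj by (simp add: bij_betw_def)
qed

lemma lex_enum_eq: "finite E \<Longrightarrow> inj_on bv_val E \<Longrightarrow> e \<in> E \<Longrightarrow> rk E e = j \<Longrightarrow> lex_enum E j = e"
  unfolding lex_enum_def
proof (rule the_equality)
  assume "finite E" "inj_on bv_val E" "e \<in> E" "rk E e = j"
  then show "e \<in> E \<and> card {e' \<in> E. bv_val e' < bv_val e} = j" by (simp add: rk_def)
  fix e' assume "e' \<in> E \<and> card {e'a \<in> E. bv_val e'a < bv_val e'} = j"
  then show "e' = e" using rk_inj[of E e' e] \<open>finite E\<close> \<open>inj_on bv_val E\<close> \<open>e \<in> E\<close> \<open>rk E e = j\<close>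
    by (simp add: rk_def)
qed

lemma lex_enum_in: "finite E \<Longrightarrow> inj_on bv_val E \<Longrightarrow> j < card E \<Longrightarrow> lex_enum E j \<in> E \<and> rk E (lex_enum E j) = j"
proof -
  assume f: "finite E" and i: "inj_on bv_val E" and j: "j < card E"
  have "j \<in> rk E ` E" using rk_bij[OF f i] j by (simp add: bij_betw_def)
  then obtain e where "e \<in> E" "rk E e = j" by blast
  then show ?thesis using lex_enum_eq[OF f i] by simp
qed

lemma phi_bij: "E \<subseteq> vecs n \<Longrightarrow> card E = 2 ^ k \<Longrightarrow> bij_betw (\<lambda>y. lex_enum E (bv_val y)) (vecs k) E"
proof -
  assume sub: "E \<subseteq> vecs n" and c: "card E = 2 ^ k"
  have f: "finite E" using sub finite_vecs finite_subset by blast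
  have i: "inj_on bv_val E" using bv_inj inj_on_subset sub by blast
  have b: "bij_betw (lex_enum E) {..<card E} E"
    by (rule bij_betw_byWitness[where f'="rk E"])
      (use lex_enum_eq[OF f i] lex_enum_in[OF f i] rk_less[OF f] in auto)
  have "bij_betw (lex_enum E \<circ> bv_val) (vecs k) E"
    using bij_betw_trans[OF bv_bij[of k]] b c by simp
  then show ?thesis by (simp add: comp_def)
qed




lemma nth_vxor: "i < length u \<Longrightarrow> i < length v \<Longrightarrow> vxor u v ! i = (u ! i \<noteq> v ! i)"
  by (simp add: vxor_def)

lemma sub_fin: "E \<subseteq> vecs n \<Longrightarrow> finite E"
  using finite_subset finite_vecs by blast

lemma sub_inj: "E \<subseteq> vecs n \<Longrightarrow> inj_on bv_val E"
  using bv_inj inj_on_subset by blast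

lemma tail_subspace:
  assumes L: "lin_subspace (Suc n) E"
  shows "lin_subspace n {t. False # t \<in> E}"
  using L unfolding lin_subspace_def
  apply (auto simp: vecs_def zerov_Suc)
  apply (drule_tac x="False # a" in bspec, assumption)
  apply (drule_tac x="False # b" in bspec, assumption)
  apply simp
  done

lemma rk_cons_false:
  assumes "E \<subseteq> vecs (Suc n)" "a \<in> vecs n"
  shows "{e\<in>E. bv_val e < bv_val (False # a)} = Cons False ` {t\<in>{t. False # t \<in> E}. bv_val t < bv_val a}"
proof (rule set_eqI, rule iffI)
  fix e assume e: "e \<in> {e\<in>E. bv_val e < bv_val (False # a)}"
  then have le: "length e = Suc n" using assms by (auto simp: vecs_def)
  then obtain h t where et: "e = h # t" by (cases e) auto
  have lt: "length t = n" using le et by simp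
  have la: "length a = n" using assms by (simp add: vecs_def)
  have "h = False"
  proof (rule ccontr)
    assume "h \<noteq> False"
    then have "bv_val e = 2 ^ n + bv_val t" using et lt by simp
    moreover have "bv_val a < 2 ^ n" using bv_less[of a] la by simp
    ultimately show False using e by simp
  qed
  then show "e \<in> Cons False ` {t\<in>{t. False # t \<in> E}. bv_val t < bv_val a}"
    using e et by auto
qed auto

lemma lin_main:
  "lin_subspace n E \<Longrightarrow> card E = 2 ^ k \<Longrightarrow> x \<in> vecs n \<Longrightarrow>
   \<exists>w\<in>vecs k. \<forall>y\<in>vecs k. dotp x (lex_enum E (bv_val y)) = dotp w y"
proof (induction n arbitrary: E k x)
  case 0
  then have "x = []" by (simp add: vecs_def)
  then show ?case
  proof (intro bexI[of _ "zerov k"] ballI)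
    fix y show "dotp x (lex_enum E (bv_val y)) = dotp (zerov k) y"
      using dotp_zero[of y k] dotp_comm[of "zerov k" y] \<open>x = []\<close> by simp
  qed (simp add: vecs_def zerov_def)
next
  case (Suc n)
  note L = Suc.prems(1)
  have Esub: "E \<subseteq> vecs (Suc n)" using L by (simp add: lin_subspace_def)
  have fE: "finite E" using sub_fin[OF Esub] .
  have iE: "inj_on bv_val E" using sub_inj[OF Esub] .
  obtain c x' where x: "x = c # x'" "x' \<in> vecs n" using Suc.prems(3)
    by (cases x) (auto simp: vecs_def)
  define E0 where "E0 = {t. False # t \<in> E}"
  have L0: "lin_subspace n E0" unfolding E0_def by (rule tail_subspace[OF L])
  have E0sub: "E0 \<subseteq> vecs n" using L0 by (simp add: lin_subspace_def)
  have fE0: "finite E0" using sub_fin[OF E0sub] .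
  have iE0: "inj_on bv_val E0" using sub_inj[OF E0sub] .
  show ?case
  proof (cases "\<exists>t. True # t \<in> E")
    case False
    have EE: "E = Cons False ` E0"
    proof (rule set_eqI, rule iffI)
      fix e assume e: "e \<in> E"
      then have "length e = Suc n" using Esub by (auto simp: vecs_def)
      then obtain h t where et: "e = h # t" by (cases e) auto
      then have "h = False" using False e by (cases h) auto
      then show "e \<in> Cons False ` E0" using e et E0_def by auto
    qed (auto simp: E0_def)
    have cE0: "card E0 = 2 ^ k" using Suc.prems(2) EE by (simp add: card_image)
    from Suc.IH[OF L0 cE0 x(2)] obtain w where w: "w \<in> vecs k"
      "\<forall>y\<in>vecs k. dotp x' (lex_enum E0 (bv_val y)) = dotp w y" by blast
    have "\<forall>y\<in>vecs k. dotp x (lex_enum E (bv_val y)) = dotp w y"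
    proof
      fix y assume y: "y \<in> vecs k"
      have j: "bv_val y < card E0" using bv_less[of y] y cE0 by (simp add: vecs_def)
      define a where "a = lex_enum E0 (bv_val y)"
      have a: "a \<in> E0" "rk E0 a = bv_val y" using lex_enum_in[OF fE0 iE0 j] a_def by auto
      have av: "a \<in> vecs n" using a E0sub by auto
      have "rk E (False # a) = rk E0 a"
        unfolding rk_def rk_cons_false[OF Esub av] E0_def[symmetric] by (simp add: card_image)
      then have "lex_enum E (bv_val y) = False # a"
        using lex_enum_eq[OF fE iE] a E0_def by auto
      then show "dotp x (lex_enum E (bv_val y)) = dotp w y"
        using w y x a_def by simp
    qed
    then show ?thesis using w by blast
  next
    case True
    define T where "T = {t. True # t \<in> E}"
    have Tsub: "T \<subseteq> vecs n" using Esub by (auto simp: T_def vecs_def)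
    have Tne: "T \<noteq> {}" using True T_def by auto
    have fT: "finite T" using sub_fin[OF Tsub] .
    obtain t where t: "t \<in> T" "\<forall>t'\<in>T. bv_val t \<le> bv_val t'"
    proof -
      have "Min (bv_val ` T) \<in> bv_val ` T" using fT Tne by simp
      then obtain t where "t \<in> T" "bv_val t = Min (bv_val ` T)" by auto
      moreover have "\<forall>t'\<in>T. Min (bv_val ` T) \<le> bv_val t'" using fT by simp
      ultimately show ?thesis using that by auto
    qed
    have tv: "t \<in> vecs n" using t Tsub by auto
    have tE: "True # t \<in> E" using t T_def by auto
    have xorE: "\<And>a b. a \<in> E \<Longrightarrow> b \<in> E \<Longrightarrow> vxor a b \<in> E" using L by (simp add: lin_subspace_def)
    have TE0: "T = vxor t ` E0"
    proof (rule set_eqI, rule iffI)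
      fix t' assume t': "t' \<in> T"
      have "True # t' \<in> E" using t' T_def by auto
      from xorE[OF tE this] have "vxor (True # t) (True # t') \<in> E" .
      then have "vxor t t' \<in> E0" by (simp add: E0_def)
      moreover have "t' = vxor t (vxor t t')" using tv t' Tsub by (subst vxor_vxor) (auto simp: vecs_def)
      ultimately show "t' \<in> vxor t ` E0" by blast
    next
      fix t' assume "t' \<in> vxor t ` E0"
      then obtain a where a: "a \<in> E0" "t' = vxor t a" by auto
      have "False # a \<in> E" using a E0_def by auto
      from xorE[OF tE this] have "vxor (True # t) (False # a) \<in> E" .
      then show "t' \<in> T" using a by (simp add: T_def)
    qed
    have inj_t: "inj_on (vxor t) (vecs n)"
      using tv by (intro inj_on_inverseI[where g="vxor t"]) (auto simp: vecs_def vxor_vxor)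
    have EE: "E = Cons False ` E0 \<union> Cons True ` T"
    proof (rule set_eqI, rule iffI)
      fix e assume e: "e \<in> E"
      then have "length e = Suc n" using Esub by (auto simp: vecs_def)
      then obtain h t where et: "e = h # t" by (cases e) auto
      then show "e \<in> Cons False ` E0 \<union> Cons True ` T" using e E0_def T_def by (cases h) auto
    qed (auto simp: E0_def T_def)
    have cT: "card T = card E0" unfolding TE0 using inj_on_subset[OF inj_t E0sub] by (simp add: card_image)
    have "card E = card E0 + card T" unfolding EE
      by (subst card_Un_disjoint) (auto simp: fE0 fT card_image)
    then have c2: "2 * card E0 = 2 ^ k" using cT Suc.prems(2) by simp
    then obtain k' where k: "k = Suc k'" by (cases k) auto
    have cE0: "card E0 = 2 ^ k'" using c2 k by simp
    have ord1: "bv_val (vxor t a) < bv_val (vxor t b)"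
      if a: "a \<in> E0" and b: "b \<in> E0" and ab: "bv_val a < bv_val b" for a b
    proof -
      have la: "length a = n" and lb: "length b = n" and lt: "length t = n"
        using a b E0sub tv by (auto simp: vecs_def)
      have "a \<noteq> b" using ab by auto
      then obtain p where p: "p < n" "\<forall>i<p. a ! i = b ! i" "a ! p \<noteq> b ! p"
        using first_diff[of a b] la lb by auto
      have bp: "b ! p" using diff_at[of a b p] p la lb ab by simp
      have ap: "\<not> a ! p" using bp p by simp
      define d where "d = vxor a b"
      have dE0: "d \<in> E0" using L0 a b by (simp add: lin_subspace_def d_def)
      have ld: "length d = n" using la lb d_def by simp
      have d1: "\<forall>i<p. d ! i = False" using p la lb by (simp add: d_def nth_vxor)
      have d2: "d ! p" using p la lb ap bp by (simp add: d_def nth_vxor)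
      have tdT: "vxor t d \<in> T" using TE0 dE0 by auto
      have "\<not> t ! p"
      proof
        assume tp: "t ! p"
        have "bv_val (vxor t d) < bv_val t"
          using diff_at[of "vxor t d" t p] p lt ld d1 d2 tp by (simp add: nth_vxor)
        then show False using t(2) tdT by force
      qed
      then show ?thesis
        using diff_at[of "vxor t a" "vxor t b" p] p lt la lb ap bp by (simp add: nth_vxor)
    qed
    have ordiff: "bv_val (vxor t a) < bv_val (vxor t b) \<longleftrightarrow> bv_val a < bv_val b"
      if a: "a \<in> E0" and b: "b \<in> E0" for a b
    proof
      assume h: "bv_val (vxor t a) < bv_val (vxor t b)"
      show "bv_val a < bv_val b"
      proof (rule ccontr)
        assume "\<not> bv_val a < bv_val b"
        then have "bv_val b < bv_val a \<or> a = b" using iE0 a b by (metis inj_on_def linorder_neqE_nat)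
        then show False using ord1[OF b a] h by auto
      qed
    qed (rule ord1[OF a b])
    from Suc.IH[OF L0 cE0 x(2)] obtain w0 where w0: "w0 \<in> vecs k'"
      "\<forall>y\<in>vecs k'. dotp x' (lex_enum E0 (bv_val y)) = dotp w0 y" by blast
    define w where "w = (c \<noteq> dotp x' t) # w0"
    have wv: "w \<in> vecs k" using w0 k by (simp add: w_def vecs_def)
    have "\<forall>y\<in>vecs k. dotp x (lex_enum E (bv_val y)) = dotp w y"
    proof
      fix y assume y: "y \<in> vecs k"
      then obtain bb y' where y': "y = bb # y'" "y' \<in> vecs k'" using k by (cases y) (auto simp: vecs_def)
      have j: "bv_val y' < card E0" using bv_less[of y'] y' cE0 by (simp add: vecs_def)
      define a where "a = lex_enum E0 (bv_val y')"
      have a: "a \<in> E0" "rk E0 a = bv_val y'" using lex_enum_in[OF fE0 iE0 j] a_def by auto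
      have av: "a \<in> vecs n" using a E0sub by auto
      have la: "length a = n" using av by (simp add: vecs_def)
      have lt: "length t = n" using tv by (simp add: vecs_def)
      have dx: "dotp x' a = dotp w0 y'" using w0 y' a_def by simp
      show "dotp x (lex_enum E (bv_val y)) = dotp w y"
      proof (cases bb)
        case False
        have "rk E (False # a) = rk E0 a"
          unfolding rk_def rk_cons_false[OF Esub av] E0_def[symmetric] by (simp add: card_image)
        then have "lex_enum E (bv_val y) = False # a"
          using lex_enum_eq[OF fE iE] a E0_def y' False by auto
        then show ?thesis using x dx y' False w_def by simp
      next
        case True
        have set: "{e\<in>E. bv_val e < bv_val (True # vxor t a)} =
           Cons False ` E0 \<union> Cons True ` (vxor t ` {a'\<in>E0. bv_val a' < bv_val a})"
        proof (rule set_eqI, rule iffI)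
          fix e assume e: "e \<in> {e\<in>E. bv_val e < bv_val (True # vxor t a)}"
          then have "e \<in> Cons False ` E0 \<union> Cons True ` T" using EE by auto
          then show "e \<in> Cons False ` E0 \<union> Cons True ` (vxor t ` {a'\<in>E0. bv_val a' < bv_val a})"
          proof
            assume "e \<in> Cons False ` E0" then show ?thesis by blast
          next
            assume "e \<in> Cons True ` T"
            then obtain a' where a': "a' \<in> E0" "e = True # vxor t a'" using TE0 by auto
            have la': "length a' = n" using a' E0sub by (auto simp: vecs_def)
            have "bv_val (vxor t a') < bv_val (vxor t a)" using e a' la' la lt by simp
            then have "bv_val a' < bv_val a" using ordiff[OF a'(1) a(1)] by simp
            then show ?thesis using a' by blast
          qed
        next
          fix e assume e: "e \<in> Cons False ` E0 \<union> Cons True ` (vxor t ` {a'\<in>E0. bv_val a' < bv_val a})"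
          then show "e \<in> {e\<in>E. bv_val e < bv_val (True # vxor t a)}"
          proof
            assume "e \<in> Cons False ` E0"
            then obtain a' where a': "a' \<in> E0" "e = False # a'" by auto
            have la': "length a' = n" using a' E0sub by (auto simp: vecs_def)
            have "bv_val a' < 2 ^ n" using bv_less[of a'] la' by simp
            then show ?thesis using a' E0_def la lt by simp
          next
            assume "e \<in> Cons True ` (vxor t ` {a'\<in>E0. bv_val a' < bv_val a})"
            then obtain a' where a': "a' \<in> E0" "bv_val a' < bv_val a" "e = True # vxor t a'" by auto
            have la': "length a' = n" using a' E0sub by (auto simp: vecs_def)
            have "vxor t a' \<in> T" using TE0 a' by auto
            then have "e \<in> E" using a' T_def by simp
            moreover have "bv_val (vxor t a') < bv_val (vxor t a)" using ordiff[OF a'(1) a(1)] a' by simp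
            ultimately show ?thesis using a' la la' lt by simp
          qed
        qed
        have sub1: "{a'\<in>E0. bv_val a' < bv_val a} \<subseteq> vecs n" using E0sub by auto
        have "card (Cons False ` E0 \<union> Cons True ` (vxor t ` {a'\<in>E0. bv_val a' < bv_val a}))
            = card E0 + rk E0 a"
          apply (subst card_Un_disjoint)
          using fE0 apply (auto simp: card_image)[3]
          apply (simp add: card_image rk_def)
          apply (subst card_image)
           apply (rule inj_on_subset[OF inj_t sub1])
          apply simp
          done
        then have "rk E (True # vxor t a) = bv_val y"
          unfolding rk_def set using a cE0 y' True by (simp add: vecs_def rk_def)
        moreover have "True # vxor t a \<in> E" using TE0 a T_def by auto
        ultimately have "lex_enum E (bv_val y) = True # vxor t a"
          using lex_enum_eq[OF fE iE] by auto
        then show ?thesis using x dx y' True w_def la lt by (simp add: dotp_vxor) blast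
      qed
    qed
    then show ?thesis using wv by blast
  qed
qed




lemma sgn1_xor2: "sgn1 (a = (\<not> b)) = sgn1 a * sgn1 b"
  by (simp add: sgn1_def)

lemma orth2: "w \<in> vecs n \<Longrightarrow> v \<in> vecs n \<Longrightarrow>
   (\<Sum>x\<in>vecs n. sgn1 (dotp x w) * sgn1 (dotp x v)) = (if w = v then 2 ^ n else 0)"
  using orth[of w n v] by (simp add: sgn1_xor2)

lemma K: "x \<in> vecs n \<Longrightarrow>
  (\<Sum>u\<in>vecs n. (\<Sum>y\<in>vecs n. h y * sgn1 (dotp u y)) * sgn1 (dotp u x)) = 2 ^ n * (h x :: int)"
proof -
  assume x: "x \<in> vecs n"
  have "(\<Sum>u\<in>vecs n. (\<Sum>y\<in>vecs n. h y * sgn1 (dotp u y)) * sgn1 (dotp u x))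
      = (\<Sum>u\<in>vecs n. \<Sum>y\<in>vecs n. h y * (sgn1 (dotp u y) * sgn1 (dotp u x)))"
    by (simp add: sum_distrib_right mult.assoc)
  also have "\<dots> = (\<Sum>y\<in>vecs n. \<Sum>u\<in>vecs n. h y * (sgn1 (dotp u y) * sgn1 (dotp u x)))"
    by (rule sum.swap)
  also have "\<dots> = (\<Sum>y\<in>vecs n. h y * (if y = x then 2 ^ n else 0))"
    by (intro sum.cong refl) (simp add: sum_distrib_left[symmetric] orth2 x)
  also have "\<dots> = 2 ^ n * h x"
    using x by (simp add: if_distrib sum.delta cong: if_cong)
  finally show ?thesis .
qed

lemma walsh_alt: "walsh n f u = (\<Sum>y\<in>vecs n. sgn1 (f y) * sgn1 (dotp u y))"
  unfolding walsh_def by (simp add: sgn1_xor2)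

lemma abs_sgn1[simp]: "\<bar>sgn1 b\<bar> = 1" by (simp add: sgn1_def)

lemma inv_iff: "(\<exists>f. \<forall>u\<in>vecs n. walsh n f u = F u) \<longleftrightarrow>
   (\<forall>x\<in>vecs n. \<bar>\<Sum>u\<in>vecs n. F u * sgn1 (dotp u x)\<bar> = 2 ^ n)"
proof
  assume "\<exists>f. \<forall>u\<in>vecs n. walsh n f u = F u"
  then obtain f where f: "\<forall>u\<in>vecs n. walsh n f u = F u" by blast
  show "\<forall>x\<in>vecs n. \<bar>\<Sum>u\<in>vecs n. F u * sgn1 (dotp u x)\<bar> = 2 ^ n"
  proof
    fix x assume x: "x \<in> vecs n"
    have "(\<Sum>u\<in>vecs n. F u * sgn1 (dotp u x)) = (\<Sum>u\<in>vecs n. walsh n f u * sgn1 (dotp u x))"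
      using f by simp
    also have "\<dots> = 2 ^ n * sgn1 (f x)" unfolding walsh_alt by (rule K[OF x])
    finally show "\<bar>\<Sum>u\<in>vecs n. F u * sgn1 (dotp u x)\<bar> = 2 ^ n" by (simp add: abs_mult)
  qed
next
  assume G: "\<forall>x\<in>vecs n. \<bar>\<Sum>u\<in>vecs n. F u * sgn1 (dotp u x)\<bar> = 2 ^ n"
  define Gf where "Gf x = (\<Sum>u\<in>vecs n. F u * sgn1 (dotp u x))" for x
  define f where "f x = (Gf x < 0)" for x
  have Gx: "Gf x = 2 ^ n * sgn1 (f x)" if x: "x \<in> vecs n" for x
  proof -
    have a: "\<bar>Gf x\<bar> = 2 ^ n" using G x unfolding Gf_def by blast
    then show ?thesis by (cases "Gf x < 0") (auto simp: f_def sgn1_def abs_if)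
  qed
  have "\<forall>w\<in>vecs n. walsh n f w = F w"
  proof
    fix w assume w: "w \<in> vecs n"
    have "2 ^ n * walsh n f w = (\<Sum>y\<in>vecs n. (2 ^ n * sgn1 (f y)) * sgn1 (dotp w y))"
      unfolding walsh_alt by (simp add: sum_distrib_left mult.assoc)
    also have "\<dots> = (\<Sum>y\<in>vecs n. Gf y * sgn1 (dotp y w))"
      using Gx by (simp add: dotp_comm)
    also have "\<dots> = (\<Sum>y\<in>vecs n. (\<Sum>u\<in>vecs n. F u * sgn1 (dotp y u)) * sgn1 (dotp y w))"
      unfolding Gf_def by (simp add: dotp_comm)
    also have "\<dots> = 2 ^ n * F w" by (rule K[OF w])
    finally show "walsh n f w = F w" by simp
  qed
  then show "\<exists>f. \<forall>u\<in>vecs n. walsh n f u = F u" by blast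
qed

lemma X_walsh:
  assumes E: "subspace_dim n E k" and v: "v \<in> vecs n" and x: "x \<in> vecs n"
  shows "\<exists>w\<in>vecs k. \<bar>Xsum (vxor v ` E) f x\<bar> = \<bar>walsh k (coset_transfer v E f) w\<bar>"
proof -
  have L: "lin_subspace n E" and c: "card E = 2 ^ k" using E by (auto simp: subspace_dim_def)
  have Esub: "E \<subseteq> vecs n" using L by (simp add: lin_subspace_def)
  obtain w where w: "w \<in> vecs k" "\<forall>y\<in>vecs k. dotp x (lex_enum E (bv_val y)) = dotp w y"
    using lin_main[OF L c x] by blast
  have lv: "length v = n" using v by (simp add: vecs_def)
  have inj: "inj_on (vxor v) E"
    using Esub lv by (intro inj_on_inverseI[where g="vxor v"]) (auto simp: vecs_def vxor_vxor)
  have bij: "bij_betw (\<lambda>y. lex_enum E (bv_val y)) (vecs k) E" by (rule phi_bij[OF Esub c])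
  have "Xsum (vxor v ` E) f x = (\<Sum>e\<in>E. sgn1 (f (vxor v e) \<noteq> dotp x (vxor v e)))"
    unfolding Xsum_def by (simp add: sum.reindex[OF inj])
  also have "\<dots> = (\<Sum>y\<in>vecs k. sgn1 (f (vxor v (lex_enum E (bv_val y))) \<noteq> dotp x (vxor v (lex_enum E (bv_val y)))))"
    by (rule sum.reindex_bij_betw[OF bij, symmetric])
  also have "\<dots> = (\<Sum>y\<in>vecs k. sgn1 (dotp x v) * sgn1 (coset_transfer v E f y \<noteq> dotp w y))"
  proof (rule sum.cong[OF refl])
    fix y assume y: "y \<in> vecs k"
    have "lex_enum E (bv_val y) \<in> E" using bij y by (auto simp: bij_betw_def)
    then have le: "length (lex_enum E (bv_val y)) = n" using Esub by (auto simp: vecs_def)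
    show "sgn1 (f (vxor v (lex_enum E (bv_val y))) \<noteq> dotp x (vxor v (lex_enum E (bv_val y))))
        = sgn1 (dotp x v) * sgn1 (coset_transfer v E f y \<noteq> dotp w y)"
      using w(2) y le lv by (simp add: dotp_vxor coset_transfer_def sgn1_def)
  qed
  also have "\<dots> = sgn1 (dotp x v) * walsh k (coset_transfer v E f) w"
    unfolding walsh_def by (simp add: sum_distrib_left)
  finally show ?thesis using w(1) by (intro bexI[of _ w]) (auto simp: abs_mult)
qed

lemma X_nonzero:
  assumes S: "S \<subseteq> vecs n" and v: "v \<in> S"
  shows "\<exists>x\<in>vecs n. Xsum S f x \<noteq> 0"
proof (rule ccontr)
  assume "\<not> ?thesis"
  then have z: "\<forall>x\<in>vecs n. Xsum S f x = 0" by blast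
  have fS: "finite S" using sub_fin[OF S] .
  have "(\<Sum>x\<in>vecs n. Xsum S f x * sgn1 (dotp x v)) = (\<Sum>x\<in>vecs n. \<Sum>s\<in>S. sgn1 (f s) * (sgn1 (dotp x s) * sgn1 (dotp x v)))"
    unfolding Xsum_def by (simp add: sum_distrib_right sgn1_xor2 mult.assoc)
  also have "\<dots> = (\<Sum>s\<in>S. \<Sum>x\<in>vecs n. sgn1 (f s) * (sgn1 (dotp x s) * sgn1 (dotp x v)))"
    by (rule sum.swap)
  also have "\<dots> = (\<Sum>s\<in>S. sgn1 (f s) * (if s = v then 2 ^ n else 0))"
  proof (intro sum.cong refl)
    fix s assume s: "s \<in> S"
    have "s \<in> vecs n" "v \<in> vecs n" using s v S by auto
    then show "(\<Sum>x\<in>vecs n. sgn1 (f s) * (sgn1 (dotp x s) * sgn1 (dotp x v))) = sgn1 (f s) * (if s = v then 2 ^ n else 0)"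
      by (simp add: sum_distrib_left[symmetric] orth2)
  qed
  also have "\<dots> = sgn1 (f v) * 2 ^ n"
    using v fS by (simp add: if_distrib sum.delta cong: if_cong)
  finally have "sgn1 (f v) * 2 ^ n = 0" using z by simp
  then show False by (simp add: sgn1_def split: if_splits)
qed




lemma coset_sub: "subspace_dim n E k \<Longrightarrow> v \<in> vecs n \<Longrightarrow> vxor v ` E \<subseteq> vecs n"
  by (auto simp: subspace_dim_def lin_subspace_def vecs_def)

lemma coset_mem: "subspace_dim n E k \<Longrightarrow> v \<in> vecs n \<Longrightarrow> v \<in> vxor v ` E"
  unfolding subspace_dim_def lin_subspace_def
  by (rule image_eqI[of _ _ "zerov n"]) (auto simp: vxor_zero vecs_def)

lemma plat_abs:
  assumes P: "plateaued k s g" and w: "w \<in> vecs k" and nz: "walsh k g w \<noteq> 0"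
  shows "real_of_int \<bar>walsh k g w\<bar> = 2 powr ((real k + real s) / 2)"
proof -
  let ?c = "2 powr ((real k + real s) / 2) :: real"
  have m: "real_of_int (walsh k g w) = ?c \<or> real_of_int (walsh k g w) = - ?c"
    using P w nz unfolding plateaued_def by auto
  have "?c > 0" by simp
  then have "\<bar>real_of_int (walsh k g w)\<bar> = ?c" using m by auto
  then show ?thesis by simp
qed

lemma X_plat:
  assumes E: "subspace_dim n E k" and v: "v \<in> vecs n" and P: "plateaued k s (coset_transfer v E f)"
    and x: "x \<in> vecs n" and nz: "Xsum (vxor v ` E) f x \<noteq> 0"
  shows "real_of_int \<bar>Xsum (vxor v ` E) f x\<bar> = 2 powr ((real k + real s) / 2)"
proof -
  obtain w where w: "w \<in> vecs k" "\<bar>Xsum (vxor v ` E) f x\<bar> = \<bar>walsh k (coset_transfer v E f) w\<bar>"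
    using X_walsh[OF E v x] by blast
  then have "walsh k (coset_transfer v E f) w \<noteq> 0" using nz by auto
  from plat_abs[OF P w(1) this] show ?thesis using w(2) by simp
qed

lemma sum_two:
  assumes S1: "S1 \<subseteq> V" and S2: "S2 \<subseteq> V" and d: "S1 \<inter> S2 = {}" and fV: "finite V"
  shows "(\<Sum>u\<in>V. (if u \<in> S1 then a u else if u \<in> S2 then b u else 0) * g u)
     = (\<Sum>u\<in>S1. a u * g u) + (\<Sum>u\<in>S2. b u * (g u :: int))"
proof -
  have "(\<Sum>u\<in>V. (if u \<in> S1 then a u else if u \<in> S2 then b u else 0) * g u)
      = (\<Sum>u\<in>V. (if u \<in> S1 then a u * g u else 0) + (if u \<in> S2 then b u * g u else 0))"
    using d by (intro sum.cong refl) auto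
  also have "\<dots> = (\<Sum>u\<in>V \<inter> S1. a u * g u) + (\<Sum>u\<in>V \<inter> S2. b u * g u)"
    by (simp add: sum.distrib sum.inter_restrict[OF fV])
  also have "V \<inter> S1 = S1" using S1 by auto
  also have "V \<inter> S2 = S2" using S2 by auto
  finally show ?thesis .
qed

lemma X_as_sum: "(\<Sum>u\<in>S. (sgn1 (f u) * c) * sgn1 (dotp u x)) = c * Xsum S f x"
  unfolding Xsum_def by (simp add: sum_distrib_left sgn1_xor2 dotp_comm mult_ac)

lemma cancel_abs: "(c::int) > 0 \<Longrightarrow> \<bar>c * a\<bar> = c * b \<Longrightarrow> \<bar>a\<bar> = b"
  by (simp add: abs_mult)

theorem mainTheorem3:
  fixes n l1 l2 s1 s2 :: nat
    and E1 E2 :: "bool list set"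
    and v1 v2 :: "bool list"
    and f1 f2 :: "bool list \<Rightarrow> bool"
  assumes n_even: "even n"
    and E1: "subspace_dim n E1 l1"
    and E2: "subspace_dim n E2 l2"
    and v1: "v1 \<in> vecs n"
    and v2: "v2 \<in> vecs n"
    and disj: "(vxor v1 ` E1) \<inter> (vxor v2 ` E2) = {}"
    and card_lt: "(2::nat) ^ l1 + 2 ^ l2 < 2 ^ n"
    and plat1: "plateaued l1 s1 (coset_transfer v1 E1 f1)"
    and plat2: "plateaued l2 s2 (coset_transfer v2 E2 f2)"
    and tds: "totally_disjoint_spectra n (vxor v1 ` E1) f1 (vxor v2 ` E2) f2"
  shows "(\<exists>f :: bool list \<Rightarrow> bool. \<forall>u\<in>vecs n.
            walsh n f u =
              (if u \<in> vxor v1 ` E1 then sgn1 (f1 u) * 2 ^ ((n + 2) div 2)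
               else if u \<in> vxor v2 ` E2 then sgn1 (f2 u) * 2 ^ (n div 2)
               else 0))
         \<longleftrightarrow> (l1 + s1 + 2 = n \<and> l2 + s2 = n)"
proof -
  define S1 where "S1 = vxor v1 ` E1"
  define S2 where "S2 = vxor v2 ` E2"
  define X1 where "X1 = Xsum S1 f1"
  define X2 where "X2 = Xsum S2 f2"
  from n_even obtain h where h: "n = 2 * h" by (elim evenE)
  have h1: "h \<ge> 1"
  proof (rule ccontr)
    assume "\<not> h \<ge> 1"
    then have "n = 0" using h by simp
    then show False using card_lt by simp
  qed
  have S1sub: "S1 \<subseteq> vecs n" using coset_sub[OF E1 v1] unfolding S1_def .
  have S2sub: "S2 \<subseteq> vecs n" using coset_sub[OF E2 v2] unfolding S2_def .
  have nh1: "(n + 2) div 2 = h + 1" and nh: "n div 2 = h" using h by simp_all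
  have sumW: "(\<Sum>u\<in>vecs n. (if u \<in> S1 then sgn1 (f1 u) * 2 ^ ((n + 2) div 2)
               else if u \<in> S2 then sgn1 (f2 u) * 2 ^ (n div 2) else 0) * sgn1 (dotp u x))
      = 2 ^ (h + 1) * X1 x + 2 ^ h * X2 x" for x
  proof -
    have "(\<Sum>u\<in>vecs n. (if u \<in> S1 then sgn1 (f1 u) * 2 ^ ((n + 2) div 2)
               else if u \<in> S2 then sgn1 (f2 u) * 2 ^ (n div 2) else 0) * sgn1 (dotp u x))
      = (\<Sum>u\<in>S1. (sgn1 (f1 u) * 2 ^ ((n + 2) div 2)) * sgn1 (dotp u x))
        + (\<Sum>u\<in>S2. (sgn1 (f2 u) * 2 ^ (n div 2)) * sgn1 (dotp u x))"
      by (rule sum_two[OF S1sub S2sub disj[folded S1_def S2_def] finite_vecs])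
    also have "\<dots> = 2 ^ ((n + 2) div 2) * X1 x + 2 ^ (n div 2) * X2 x"
      unfolding X_as_sum X1_def X2_def ..
    finally show ?thesis unfolding nh1 nh .
  qed
  have LHS: "(\<exists>f :: bool list \<Rightarrow> bool. \<forall>u\<in>vecs n.
            walsh n f u =
              (if u \<in> vxor v1 ` E1 then sgn1 (f1 u) * 2 ^ ((n + 2) div 2)
               else if u \<in> vxor v2 ` E2 then sgn1 (f2 u) * 2 ^ (n div 2)
               else 0))
     \<longleftrightarrow> (\<forall>x\<in>vecs n. \<bar>2 ^ (h + 1) * X1 x + 2 ^ h * X2 x\<bar> = 2 ^ n)"
  proof -
    have sumW': "(\<Sum>u\<in>vecs n. (if u \<in> vxor v1 ` E1 then sgn1 (f1 u) * 2 ^ ((n + 2) div 2)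
               else if u \<in> vxor v2 ` E2 then sgn1 (f2 u) * 2 ^ (n div 2) else 0) * sgn1 (dotp u x))
      = 2 ^ (h + 1) * X1 x + 2 ^ h * X2 x" for x
      using sumW[of x] unfolding S1_def S2_def .
    show ?thesis
      apply (subst inv_iff)
      apply (simp only: sumW')
      done
  qed
  have P1: "real_of_int \<bar>X1 x\<bar> = 2 powr ((real l1 + real s1) / 2)" if "x \<in> vecs n" "X1 x \<noteq> 0" for x
    using X_plat[OF E1 v1 plat1 that(1) that(2)[unfolded X1_def S1_def]] unfolding X1_def S1_def .
  have P2: "real_of_int \<bar>X2 x\<bar> = 2 powr ((real l2 + real s2) / 2)" if "x \<in> vecs n" "X2 x \<noteq> 0" for x
    using X_plat[OF E2 v2 plat2 that(1) that(2)[unfolded X2_def S2_def]] unfolding X2_def S2_def .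
  obtain x1 where x1: "x1 \<in> vecs n" "X1 x1 \<noteq> 0"
    using X_nonzero[OF S1sub coset_mem[OF E1 v1, folded S1_def]] unfolding X1_def by blast
  obtain x2 where x2: "x2 \<in> vecs n" "X2 x2 \<noteq> 0"
    using X_nonzero[OF S2sub coset_mem[OF E2 v2, folded S2_def]] unfolding X2_def by blast
  have T: "X1 x * X2 x = 0" "\<bar>X1 x\<bar> + \<bar>X2 x\<bar> > 0" if "x \<in> vecs n" for x
  proof -
    have "\<forall>u\<in>vecs n. X1 u * X2 u = 0 \<and> \<bar>X1 u\<bar> + \<bar>X2 u\<bar> > 0"
      using tds unfolding totally_disjoint_spectra_def X1_def X2_def S1_def S2_def .
    then show "X1 x * X2 x = 0" "\<bar>X1 x\<bar> + \<bar>X2 x\<bar> > 0" using that by blast+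
  qed
  have pw: "(2::int) ^ n = 2 ^ (h + 1) * 2 ^ (h - 1)" "(2::int) ^ n = 2 ^ h * 2 ^ h"
  proof -
    have "h + 1 + (h - 1) = n" "h + h = n" using h h1 by simp_all
    then show "(2::int) ^ n = 2 ^ (h + 1) * 2 ^ (h - 1)" "(2::int) ^ n = 2 ^ h * 2 ^ h"
      by (simp_all only: power_add[symmetric])
  qed
  have powr_eq: "(2::real) powr a = 2 ^ m \<longleftrightarrow> a = real m" for a m
  proof -
    have "(2::real) ^ m = 2 powr real m" by (simp add: powr_realpow)
    then show ?thesis using powr_inj[of 2 a "real m"] by simp
  qed
  have rh: "real (h - 1) = real h - 1" using h1 by (simp add: of_nat_diff)
  show ?thesis
    unfolding LHS
  proof
    assume A: "\<forall>x\<in>vecs n. \<bar>2 ^ (h + 1) * X1 x + 2 ^ h * X2 x\<bar> = 2 ^ n"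
    have "X2 x1 = 0" using T(1)[OF x1(1)] x1(2) by simp
    moreover have "\<bar>2 ^ (h + 1) * X1 x1 + 2 ^ h * X2 x1\<bar> = 2 ^ n" using A x1(1) by blast
    ultimately have "\<bar>2 ^ (h + 1) * X1 x1\<bar> = 2 ^ (h + 1) * 2 ^ (h - 1)" using pw(1) by simp
    then have "\<bar>X1 x1\<bar> = 2 ^ (h - 1)" by (rule cancel_abs[rotated]) simp
    then have "real_of_int \<bar>X1 x1\<bar> = 2 ^ (h - 1)" by simp
    then have "2 powr ((real l1 + real s1) / 2) = (2::real) ^ (h - 1)" using P1[OF x1] by linarith
    then have "(real l1 + real s1) / 2 = real (h - 1)" by (rule powr_eq[THEN iffD1])
    then have "(real l1 + real s1) / 2 = real h - 1" unfolding rh .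
    then have "real l1 + real s1 + 2 = 2 * real h" by (simp add: field_simps)
    then have "real (l1 + s1 + 2) = real (2 * h)" by simp
    then have c1: "l1 + s1 + 2 = n" using h by (simp only: of_nat_eq_iff)
    have "X1 x2 = 0" using T(1)[OF x2(1)] x2(2) by simp
    moreover have "\<bar>2 ^ (h + 1) * X1 x2 + 2 ^ h * X2 x2\<bar> = 2 ^ n" using A x2(1) by blast
    ultimately have "\<bar>2 ^ h * X2 x2\<bar> = 2 ^ h * 2 ^ h" using pw(2) by simp
    then have "\<bar>X2 x2\<bar> = 2 ^ h" by (rule cancel_abs[rotated]) simp
    then have "real_of_int \<bar>X2 x2\<bar> = 2 ^ h" by simp
    then have "2 powr ((real l2 + real s2) / 2) = (2::real) ^ h" using P2[OF x2] by linarith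
    then have "(real l2 + real s2) / 2 = real h" by (rule powr_eq[THEN iffD1])
    then have "real (l2 + s2) = real (2 * h)" by (simp add: field_simps)
    then have c2: "l2 + s2 = n" using h by (simp only: of_nat_eq_iff)
    show "l1 + s1 + 2 = n \<and> l2 + s2 = n" using c1 c2 by simp
  next
    assume c: "l1 + s1 + 2 = n \<and> l2 + s2 = n"
    show "\<forall>x\<in>vecs n. \<bar>2 ^ (h + 1) * X1 x + 2 ^ h * X2 x\<bar> = 2 ^ n"
    proof
      fix x assume x: "x \<in> vecs n"
      show "\<bar>2 ^ (h + 1) * X1 x + 2 ^ h * X2 x\<bar> = 2 ^ n"
      proof (cases "X1 x = 0")
        case False
        then have "X2 x = 0" using T(1)[OF x] by simp
        have "real l1 + real s1 + 2 = 2 * real h" using arg_cong[OF conjunct1[OF c], of real] h by simp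
        then have "(real l1 + real s1) / 2 = real h - 1" by (simp add: field_simps)
        then have "(real l1 + real s1) / 2 = real (h - 1)" unfolding rh .
        then have "2 powr ((real l1 + real s1) / 2) = (2::real) ^ (h - 1)" by (rule powr_eq[THEN iffD2])
        then have "real_of_int \<bar>X1 x\<bar> = 2 ^ (h - 1)" using P1[OF x False] by linarith
        then have "real_of_int \<bar>X1 x\<bar> = real_of_int (2 ^ (h - 1))" by simp
        then have "\<bar>X1 x\<bar> = 2 ^ (h - 1)" by (simp only: of_int_eq_iff)
        then show ?thesis using \<open>X2 x = 0\<close> pw by (simp add: abs_mult)
      next
        case True
        then have nz: "X2 x \<noteq> 0" using T(2)[OF x] by simp
        have "real l2 + real s2 = 2 * real h" using arg_cong[OF conjunct2[OF c], of real] h by simp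
        then have "(real l2 + real s2) / 2 = real h" by (simp add: field_simps)
        then have "2 powr ((real l2 + real s2) / 2) = (2::real) ^ h" by (rule powr_eq[THEN iffD2])
        then have "real_of_int \<bar>X2 x\<bar> = 2 ^ h" using P2[OF x nz] by linarith
        then have "real_of_int \<bar>X2 x\<bar> = real_of_int (2 ^ h)" by simp
        then have "\<bar>X2 x\<bar> = 2 ^ h" by (simp only: of_int_eq_iff)
        then show ?thesis using True pw by (simp add: abs_mult)
      qed
    qed
  qed
qed


end
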